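(* Let $L\in\mathbb{Z}_{>0}$, let $\mathcal{Z}(\lambda_1,\dots,\lambda_L)=\langle\bar 0|\mathcal{B}(\lambda_1)\cdots\mathcal{B}(\lambda_L)|0\rangle$ be the partition function of the six-vertex model with one reflecting end and domain-wall boundaries (see context), and let $\bar{\mathcal{Z}}(x_1,\dots,x_L)=\mathcal{Z}(\lambda_1,\dots,\lambda_L)\prod_{i=1}^L x_i^{L}$ with $x_i=e^{2\lambda_i}$. Then, in the limit where all $x_i\to\infty$, \[ \bar{\mathcal{Z}}\sim\frac{q^{\frac{L(L-1)}{2}}}{2^{L(2L+1)}}(q-q^{-1})^L\,[L!]_{q^2}\prod_{i=1}^{L}\big(t\,y_i^{-\frac12}-t^{-1}y_i^{\frac12}\big)\,x_i^{2L}, \] where $q=e^{\gamma}$, $t=e^{h}$, $y_i=e^{2\mu_i}$ and $[n!]_{q^2}=\prod_{k=1}^{n}(1+q^2+\dots+q^{2(k-1)})$.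
   Context: Parameters $\gamma,h,\mu_1,\dots,\mu_L\in\mathbb{C}$. Set $a(\lambda)=\sinh(\lambda+\gamma)$, $b(\lambda)=\sinh(\lambda)$, $c(\lambda)=\sinh(\gamma)$. The $R$-matrix $\mathcal{R}(\lambda)\in\mathrm{End}(\mathbb{C}^2\otimes\mathbb{C}^2)$ is, in the basis $e_1\otimes e_1,e_1\otimes e_2,e_2\otimes e_1,e_2\otimes e_2$, the matrix with rows $(a,0,0,0)$, $(0,b,c,0)$, $(0,c,b,0)$, $(0,0,0,a)$ evaluated at $\lambda$. Let $\mathbb{V}_0\cong\mathbb{C}^2$ and $\mathbb{V}_{\mathcal{Q}}=(\mathbb{C}^2)^{\otimes L}$; $\mathcal{R}_{0j}$ acts on $\mathbb{V}_0$ and the $j$-th factor of $\mathbb{V}_{\mathcal{Q}}$. Define $\tau(\lambda)=\mathcal{R}_{0L}(\lambda-\mu_L)\cdots\mathcal{R}_{01}(\lambda-\mu_1)$, $\bar\tau(\lambda)=\mathcal{R}_{01}(\lambda+\mu_1)\cdots\mathcal{R}_{0L}(\lambda+\mu_L)$, $\mathcal{K}(\lambda)=\mathrm{diag}(\sinh(h+\lambda),\sinh(h-\lambda))$ on $\mathbb{V}_0$, and $\mathcal{T}(\lambda)=\tau(\lambda)\mathcal{K}(\lambda)\bar\tau(\lambda)=\begin{pmatrix}\mathcal{A}(\lambda)&\mathcal{B}(\lambda)\\ \mathcal{C}(\lambda)&\mathcal{D}(\lambda)\end{pmatrix}$ in $\mathbb{V}_0$, with entries in $\mathrm{End}(\mathbb{V}_{\mathcal{Q}})$.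 Let $|0\rangle=e_1^{\otimes L}$ and $\langle\bar 0|$ the transpose of $e_2^{\otimes L}$, $e_1=(1,0)^T$, $e_2=(0,1)^T$. The symbol $\sim$ means that the ratio of the two sides tends to $1$ in the stated limit. *)

theory Defs
  imports Complex_Main
begin

text \<open>The basis vector e1 of C^2 is encoded by False, e2 by True.
  A basis state of the quantum space (C^2)^{\<otimes>L} is a bool list of length L;
  position j-1 of the list is the j-th tensor factor (j = 1..L).
  An operator on the quantum space is its matrix: P s u = <s| P |u>.
  An operator on V_0 \<otimes> V_Q is stored as its 2x2 block matrix in V_0:
  M a b is the (a,b) block, an operator on V_Q.\<close>

type_synonym qop = "bool list \<Rightarrow> bool list \<Rightarrow> complex"
type_synonym mop = "bool \<Rightarrow> bool \<Rightarrow> qop"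

definition states :: "nat \<Rightarrow> bool list set" where
  "states L = {s. length s = L}"

definition qmult :: "nat \<Rightarrow> qop \<Rightarrow> qop \<Rightarrow> qop" where
  "qmult L P Q = (\<lambda>s u. \<Sum>v\<in>states L. P s v * Q v u)"

definition qid :: qop where
  "qid = (\<lambda>s u. if s = u then 1 else 0)"

definition mmult :: "nat \<Rightarrow> mop \<Rightarrow> mop \<Rightarrow> mop" where
  "mmult L M N = (\<lambda>a b s u. \<Sum>c\<in>(UNIV::bool set). qmult L (M a c) (N c b) s u)"

definition mid :: mop where
  "mid = (\<lambda>a b. if a = b then qid else (\<lambda>_ _. 0))"

text \<open>Entries of the R-matrix: Rent g lam a al b be = R(lam)[(a,al),(b,be)],
  row index a \<otimes> al, column index b \<otimes> be; rows
  (a,0,0,0), (0,b,c,0), (0,c,b,0), (0,0,0,a) in the basis e1e1, e1e2, e2e1, e2e2.\<close>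
definition Rent :: "complex \<Rightarrow> complex \<Rightarrow> bool \<Rightarrow> bool \<Rightarrow> bool \<Rightarrow> bool \<Rightarrow> complex" where
  "Rent g lam a al b be =
     (if a = al \<and> b = be \<and> a = b then sinh (lam + g)
      else if a \<noteq> al \<and> b \<noteq> be then (if a = b then sinh lam else sinh g)
      else 0)"

text \<open>R_{0j}(lam): acts on V_0 and the j-th factor (list position j-1) of V_Q.\<close>
definition Rop :: "complex \<Rightarrow> complex \<Rightarrow> nat \<Rightarrow> mop" where
  "Rop g lam j = (\<lambda>a b s u.
     if length s = length u \<and> (\<forall>k<length s. k \<noteq> j - 1 \<longrightarrow> s ! k = u ! k)
     then Rent g lam a (s ! (j - 1)) b (u ! (j - 1)) else 0)"

fun tauA :: "complex \<Rightarrow> nat \<Rightarrow> (nat \<Rightarrow> complex) \<Rightarrow> complex \<Rightarrow> nat \<Rightarrow> mop" where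
  "tauA g L mu lam 0 = mid"
| "tauA g L mu lam (Suc k) = mmult L (Rop g (lam - mu (Suc k)) (Suc k)) (tauA g L mu lam k)"

fun tbarA :: "complex \<Rightarrow> nat \<Rightarrow> (nat \<Rightarrow> complex) \<Rightarrow> complex \<Rightarrow> nat \<Rightarrow> mop" where
  "tbarA g L mu lam 0 = mid"
| "tbarA g L mu lam (Suc k) = mmult L (tbarA g L mu lam k) (Rop g (lam + mu (Suc k)) (Suc k))"

definition tau :: "complex \<Rightarrow> nat \<Rightarrow> (nat \<Rightarrow> complex) \<Rightarrow> complex \<Rightarrow> mop" where
  "tau g L mu lam = tauA g L mu lam L"

definition tbar :: "complex \<Rightarrow> nat \<Rightarrow> (nat \<Rightarrow> complex) \<Rightarrow> complex \<Rightarrow> mop" where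
  "tbar g L mu lam = tbarA g L mu lam L"

definition Kop :: "complex \<Rightarrow> complex \<Rightarrow> mop" where
  "Kop h lam = (\<lambda>a b s u. if a = b then (if a then sinh (h - lam) else sinh (h + lam)) * qid s u
                          else 0)"

definition Tmon :: "complex \<Rightarrow> complex \<Rightarrow> nat \<Rightarrow> (nat \<Rightarrow> complex) \<Rightarrow> complex \<Rightarrow> mop" where
  "Tmon g h L mu lam = mmult L (mmult L (tau g L mu lam) (Kop h lam)) (tbar g L mu lam)"

definition Bop :: "complex \<Rightarrow> complex \<Rightarrow> nat \<Rightarrow> (nat \<Rightarrow> complex) \<Rightarrow> complex \<Rightarrow> qop" where
  "Bop g h L mu lam = Tmon g h L mu lam False True"

fun Bprod :: "complex \<Rightarrow> complex \<Rightarrow> nat \<Rightarrow> (nat \<Rightarrow> complex) \<Rightarrow> (nat \<Rightarrow> complex) \<Rightarrow> nat \<Rightarrow> qop" where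
  "Bprod g h L mu lams 0 = qid"
| "Bprod g h L mu lams (Suc k) = qmult L (Bprod g h L mu lams k) (Bop g h L mu (lams (Suc k)))"

text \<open>Z(lam_1..lam_L) = <0bar| B(lam_1)\<cdots>B(lam_L) |0>, |0> = e1^L, <0bar| = (e2^L)^T.\<close>
definition Zpf :: "complex \<Rightarrow> complex \<Rightarrow> nat \<Rightarrow> (nat \<Rightarrow> complex) \<Rightarrow> (nat \<Rightarrow> complex) \<Rightarrow> complex" where
  "Zpf g h L mu lams = Bprod g h L mu lams L (replicate L True) (replicate L False)"

definition Zbar :: "complex \<Rightarrow> complex \<Rightarrow> nat \<Rightarrow> (nat \<Rightarrow> complex) \<Rightarrow> (nat \<Rightarrow> complex) \<Rightarrow> complex" where
  "Zbar g h L mu lams = Zpf g h L mu lams * (\<Prod>i=1..L. exp (2 * lams i) ^ L)"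

definition qfact :: "complex \<Rightarrow> nat \<Rightarrow> complex" where
  "qfact p n = (\<Prod>k=1..n. \<Sum>j<k. p ^ j)"

end

theory Submission
  imports Defs
begin


definition G :: "complex filter" where "G = filtercomap Re at_top"

definition smult :: "complex \<Rightarrow> mop \<Rightarrow> mop" where
  "smult c M = (\<lambda>a b s u. c * M a b s u)"

definition asym :: "(complex \<Rightarrow> mop) \<Rightarrow> mop \<Rightarrow> mop \<Rightarrow> bool" where
  "asym A A0 A1 \<longleftrightarrow> (\<forall>a b s u. ((\<lambda>l. A l a b s u) \<longlongrightarrow> A0 a b s u) G \<and>
      ((\<lambda>l. exp l * (A l a b s u - A0 a b s u)) \<longlongrightarrow> A1 a b s u) G)"

lemma tendsto_expm: "((\<lambda>l::complex. exp (-l)) \<longlongrightarrow> 0) G"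
proof -
  have "filterlim Re at_top G" unfolding G_def by (rule filterlim_filtercomap)
  moreover have "((\<lambda>x::real. exp (-x)) \<longlongrightarrow> 0) at_top"
    using exp_at_bot filterlim_uminus_at_bot_at_top filterlim_compose by blast
  ultimately have "((\<lambda>l. exp (- Re l)) \<longlongrightarrow> 0) G"
    using filterlim_compose by blast
  then show ?thesis
    by (subst tendsto_norm_zero_iff[symmetric]) simp
qed

lemma sinh_norm: "2 * exp (-l) * sinh (l + c) = exp c - exp (-c) * exp (-l) ^ 2"
  for l c :: complex
  by (simp add: sinh_field_def exp_add exp_diff exp_minus field_simps power2_eq_square)

lemma lim_sinh0: "((\<lambda>l::complex. 2 * exp (-l) * sinh (l + c)) \<longlongrightarrow> exp c) G"
proof -
  have "((\<lambda>l::complex. exp c - exp (-c) * exp (-l) ^ 2) \<longlongrightarrow> exp c - exp (-c) * 0 ^ 2) G"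
    by (intro tendsto_intros tendsto_expm)
  then show ?thesis by (simp add: sinh_norm)
qed

lemma lim_sinh1: "((\<lambda>l::complex. exp l * (2 * exp (-l) * sinh (l + c) - exp c)) \<longlongrightarrow> 0) G"
proof -
  have e: "exp l * (2 * exp (-l) * sinh (l + c) - exp c) = - exp (-c) * exp (-l)" for l
    unfolding sinh_norm by (simp add: exp_minus field_simps power2_eq_square)
  have "((\<lambda>l::complex. - exp (-c) * exp (-l)) \<longlongrightarrow> - exp (-c) * 0) G"
    by (intro tendsto_intros tendsto_expm)
  then show ?thesis by (simp add: e)
qed

lemma lim_const0: "((\<lambda>l::complex. 2 * exp (-l) * c) \<longlongrightarrow> 0) G"
proof -
  have "((\<lambda>l::complex. 2 * exp (-l) * c) \<longlongrightarrow> 2 * 0 * c) G"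
    by (intro tendsto_intros tendsto_expm)
  then show ?thesis by simp
qed

lemma lim_const1: "((\<lambda>l::complex. exp l * (2 * exp (-l) * c - 0)) \<longlongrightarrow> 2 * c) G"
proof -
  have e: "exp l * (2 * exp (-l) * c - 0) = 2 * c" for l
    by (simp add: exp_minus field_simps)
  show ?thesis by (simp only: e tendsto_const)
qed

lemma asym_mmult:
  assumes A: "asym A A0 A1" and B: "asym B B0 B1"
  shows "asym (\<lambda>l. mmult L (A l) (B l)) (mmult L A0 B0)
           (\<lambda>a b s u. mmult L A1 B0 a b s u + mmult L A0 B1 a b s u)"
  unfolding asym_def
proof (intro allI conjI)
  fix a b s u
  have A0: "\<And>a b s u. ((\<lambda>l. A l a b s u) \<longlongrightarrow> A0 a b s u) G"
   and A1: "\<And>a b s u. ((\<lambda>l. exp l * (A l a b s u - A0 a b s u)) \<longlongrightarrow> A1 a b s u) G"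
    using A unfolding asym_def by auto
  have B0: "\<And>a b s u. ((\<lambda>l. B l a b s u) \<longlongrightarrow> B0 a b s u) G"
   and B1: "\<And>a b s u. ((\<lambda>l. exp l * (B l a b s u - B0 a b s u)) \<longlongrightarrow> B1 a b s u) G"
    using B unfolding asym_def by auto
  show "((\<lambda>l. mmult L (A l) (B l) a b s u) \<longlongrightarrow> mmult L A0 B0 a b s u) G"
    unfolding mmult_def qmult_def
    by (intro tendsto_sum tendsto_mult A0 B0)
  have e: "exp l * (mmult L (A l) (B l) a b s u - mmult L A0 B0 a b s u) =
     (\<Sum>c\<in>UNIV. \<Sum>v\<in>states L. (exp l * (A l a c s v - A0 a c s v)) * B l c b v u
        + A0 a c s v * (exp l * (B l c b v u - B0 c b v u)))" for l
    unfolding mmult_def qmult_def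
    by (simp add: sum_subtractf[symmetric] sum_distrib_left sum.distrib[symmetric] algebra_simps)
  show "((\<lambda>l. exp l * (mmult L (A l) (B l) a b s u - mmult L A0 B0 a b s u)) \<longlongrightarrow>
          mmult L A1 B0 a b s u + mmult L A0 B1 a b s u) G"
    unfolding e unfolding mmult_def qmult_def sum.distrib[symmetric]
    by (intro tendsto_sum tendsto_add tendsto_mult A1 B0 B1 tendsto_const)
qed



definition mzero :: mop where "mzero = (\<lambda>a b s u. 0)"
definition madd :: "mop \<Rightarrow> mop \<Rightarrow> mop" where
  "madd M N = (\<lambda>a b s u. M a b s u + N a b s u)"

definition Rent0 :: "complex \<Rightarrow> complex \<Rightarrow> bool \<Rightarrow> bool \<Rightarrow> bool \<Rightarrow> bool \<Rightarrow> complex" where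
  "Rent0 g \<nu> a al b be = (if a = al \<and> b = be \<and> a = b then exp (\<nu> + g)
      else if a \<noteq> al \<and> b \<noteq> be then (if a = b then exp \<nu> else 0) else 0)"
definition Rent1 :: "complex \<Rightarrow> bool \<Rightarrow> bool \<Rightarrow> bool \<Rightarrow> bool \<Rightarrow> complex" where
  "Rent1 g a al b be = (if a = al \<and> b = be \<and> a = b then 0
      else if a \<noteq> al \<and> b \<noteq> be then (if a = b then 0 else 2 * sinh g) else 0)"

definition ropc :: "nat \<Rightarrow> bool list \<Rightarrow> bool list \<Rightarrow> bool" where
  "ropc j s u \<longleftrightarrow> length s = length u \<and> (\<forall>k<length s. k \<noteq> j - 1 \<longrightarrow> s ! k = u ! k)"

definition R0 :: "complex \<Rightarrow> complex \<Rightarrow> nat \<Rightarrow> mop" where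
  "R0 g \<nu> j = (\<lambda>a b s u. if ropc j s u then Rent0 g \<nu> a (s ! (j - 1)) b (u ! (j - 1)) else 0)"
definition R1 :: "complex \<Rightarrow> nat \<Rightarrow> mop" where
  "R1 g j = (\<lambda>a b s u. if ropc j s u then Rent1 g a (s ! (j - 1)) b (u ! (j - 1)) else 0)"

definition K0 :: "complex \<Rightarrow> mop" where
  "K0 h = (\<lambda>a b s u. if a = b then (if a then - exp (- h) else exp h) * qid s u else 0)"

lemma lim_const1': "((\<lambda>l::complex. exp l * (2 * exp (-l) * c)) \<longlongrightarrow> 2 * c) G"
  using lim_const1[of c] by simp

lemma lim_Rent:
  "((\<lambda>l. 2 * exp (-l) * Rent g (l + \<nu>) a al b be) \<longlongrightarrow> Rent0 g \<nu> a al b be) G \<and>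
   ((\<lambda>l. exp l * (2 * exp (-l) * Rent g (l + \<nu>) a al b be - Rent0 g \<nu> a al b be))
      \<longlongrightarrow> Rent1 g a al b be) G"
proof -
  have s: "l + \<nu> + g = l + (\<nu> + g)" for l by (simp add: add.assoc)
  show ?thesis
    by (cases a; cases al; cases b; cases be)
       (simp_all add: Rent_def Rent0_def Rent1_def s lim_sinh0 lim_sinh1 lim_const0 lim_const1')
qed

lemma asym_const: "asym (\<lambda>l. M) M mzero"
  unfolding asym_def mzero_def by simp

lemma asym_Rop: "asym (\<lambda>l. smult (2 * exp (-l)) (Rop g (l + \<nu>) j)) (R0 g \<nu> j) (R1 g j)"
  unfolding asym_def
proof (intro allI)
  fix a b s u
  have r: "Rop g lam j a b s u = (if ropc j s u then Rent g lam a (s!(j-1)) b (u!(j-1)) else 0)" for lam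
    by (simp add: Rop_def ropc_def)
  show "((\<lambda>l. smult (2 * exp (- l)) (Rop g (l + \<nu>) j) a b s u) \<longlongrightarrow> R0 g \<nu> j a b s u) G \<and>
       ((\<lambda>l. exp l * (smult (2 * exp (- l)) (Rop g (l + \<nu>) j) a b s u - R0 g \<nu> j a b s u))
          \<longlongrightarrow> R1 g j a b s u) G"
  proof (cases "ropc j s u")
    case True
    then show ?thesis
      using lim_Rent[of g \<nu> a "s ! (j - 1)" b "u ! (j - 1)"]
      by (simp add: smult_def r R0_def R1_def mult.assoc)
  next
    case False
    then show ?thesis
      by (simp add: smult_def r R0_def R1_def)
  qed
qed

lemma asym_Kop: "asym (\<lambda>l. smult (2 * exp (-l)) (Kop h l)) (K0 h) mzero"
  unfolding asym_def
proof (intro allI)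
  fix a b s u
  have m: "h - l = - (l + (-h))" for l by simp
  have sm: "sinh (h - l) = - sinh (l - h)" for l
    by (metis minus_diff_eq sinh_minus)
  have e: "2 * exp (- l) * (sinh (h - l) * c) = - (2 * exp (- l) * sinh (l + (-h))) * c" for l c
    unfolding m sinh_minus by simp
  have e2: "exp l * (2 * exp (- l) * (sinh (h - l) * c) - - exp (- h) * c) =
      - (exp l * (2 * exp (- l) * sinh (l + - h) - exp (-h))) * c" for l c
    unfolding e by (simp add: algebra_simps)
  have e3: "exp l * (2 * exp (- l) * (sinh (h + l) * c) - exp h * c) =
      (exp l * (2 * exp (- l) * sinh (l + h) - exp h)) * c" for l c
    by (simp add: algebra_simps add.commute)
  have e4: "2 * exp (- l) * (sinh (h + l) * c) = 2 * exp (- l) * sinh (l + h) * c" for l c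
    by (simp add: algebra_simps add.commute)
  have l1: "((\<lambda>l. - (2 * exp (- l) * sinh (l + (-h))) * c) \<longlongrightarrow> - exp (-h) * c) G" for c
    by (intro tendsto_intros lim_sinh0)
  have l2: "((\<lambda>l. - (exp l * (2 * exp (- l) * sinh (l + - h) - exp (-h))) * c) \<longlongrightarrow> - 0 * c) G" for c
    by (intro tendsto_intros lim_sinh1)
  have l3: "((\<lambda>l. 2 * exp (- l) * sinh (l + h) * c) \<longlongrightarrow> exp h * c) G" for c
    by (intro tendsto_intros lim_sinh0)
  have l4: "((\<lambda>l. (exp l * (2 * exp (- l) * sinh (l + h) - exp h)) * c) \<longlongrightarrow> 0 * c) G" for c
    by (intro tendsto_intros lim_sinh1)
  show "((\<lambda>l. smult (2 * exp (- l)) (Kop h l) a b s u) \<longlongrightarrow> K0 h a b s u) G \<and>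
       ((\<lambda>l. exp l * (smult (2 * exp (- l)) (Kop h l) a b s u - K0 h a b s u))
          \<longlongrightarrow> mzero a b s u) G"
  proof (cases "a = b")
    case True
    show ?thesis
    proof (cases a)
      case True
      have f1: "(\<lambda>l. smult (2 * exp (- l)) (Kop h l) a b s u) = (\<lambda>l. - (2 * exp (- l) * sinh (l + (-h))) * qid s u)"
        using True \<open>a = b\<close> by (intro ext) (simp add: smult_def Kop_def e)
      have f2: "(\<lambda>l. exp l * (smult (2 * exp (- l)) (Kop h l) a b s u - K0 h a b s u)) =
         (\<lambda>l. - (exp l * (2 * exp (- l) * sinh (l + - h) - exp (-h))) * qid s u)"
        using True \<open>a = b\<close> by (intro ext) (simp add: smult_def Kop_def K0_def sm algebra_simps)
      show ?thesis unfolding f1 f2 using l1[of "qid s u"] l2[of "qid s u"] True \<open>a = b\<close>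
        by (simp add: K0_def mzero_def)
    next
      case False
      have f1: "(\<lambda>l. smult (2 * exp (- l)) (Kop h l) a b s u) = (\<lambda>l. 2 * exp (- l) * sinh (l + h) * qid s u)"
        using False \<open>a = b\<close> by (intro ext) (simp add: smult_def Kop_def e4)
      have f2: "(\<lambda>l. exp l * (smult (2 * exp (- l)) (Kop h l) a b s u - K0 h a b s u)) =
         (\<lambda>l. (exp l * (2 * exp (- l) * sinh (l + h) - exp h)) * qid s u)"
        using False \<open>a = b\<close> by (intro ext) (simp add: smult_def Kop_def K0_def e3[symmetric])
      show ?thesis unfolding f1 f2 using l3[of "qid s u"] l4[of "qid s u"] False \<open>a = b\<close>
        by (simp add: K0_def mzero_def)
    qed
  next
    case False
    then show ?thesis by (simp add: smult_def Kop_def K0_def mzero_def)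
  qed
qed

lemma mmult_smult: "mmult L (smult c A) (smult d B) = smult (c * d) (mmult L A B)"
  unfolding mmult_def qmult_def smult_def
  by (simp add: sum_distrib_left mult_ac)

lemma smult_1: "smult 1 M = M" unfolding smult_def by simp



context fixes g h :: complex and L :: nat and mu :: "nat \<Rightarrow> complex"
begin

fun ta0 :: "nat \<Rightarrow> mop" where
  "ta0 0 = mid"
| "ta0 (Suc k) = mmult L (R0 g (- mu (Suc k)) (Suc k)) (ta0 k)"

fun ta1 :: "nat \<Rightarrow> mop" where
  "ta1 0 = mzero"
| "ta1 (Suc k) = (\<lambda>a b s u. mmult L (R1 g (Suc k)) (ta0 k) a b s u
                     + mmult L (R0 g (- mu (Suc k)) (Suc k)) (ta1 k) a b s u)"

fun tb0 :: "nat \<Rightarrow> mop" where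
  "tb0 0 = mid"
| "tb0 (Suc k) = mmult L (tb0 k) (R0 g (mu (Suc k)) (Suc k))"

fun tb1 :: "nat \<Rightarrow> mop" where
  "tb1 0 = mzero"
| "tb1 (Suc k) = (\<lambda>a b s u. mmult L (tb1 k) (R0 g (mu (Suc k)) (Suc k)) a b s u
                     + mmult L (tb0 k) (R1 g (Suc k)) a b s u)"

lemma asym_tau: "asym (\<lambda>l. smult ((2 * exp (-l)) ^ k) (tauA g L mu l k)) (ta0 k) (ta1 k)"
proof (induction k)
  case 0
  then show ?case using asym_const[of mid] by (simp add: smult_1)
next
  case (Suc k)
  have e: "smult ((2 * exp (-l)) ^ Suc k) (tauA g L mu l (Suc k)) =
      mmult L (smult (2 * exp (-l)) (Rop g (l + - mu (Suc k)) (Suc k)))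
              (smult ((2 * exp (-l)) ^ k) (tauA g L mu l k))" for l
    by (simp add: mmult_smult)
  show ?case unfolding e ta0.simps ta1.simps
    by (rule asym_mmult[where L=L, OF asym_Rop[of g "- mu (Suc k)" "Suc k"] Suc.IH])
qed

lemma asym_tbar: "asym (\<lambda>l. smult ((2 * exp (-l)) ^ k) (tbarA g L mu l k)) (tb0 k) (tb1 k)"
proof (induction k)
  case 0
  then show ?case using asym_const[of mid] by (simp add: smult_1)
next
  case (Suc k)
  have e: "smult ((2 * exp (-l)) ^ Suc k) (tbarA g L mu l (Suc k)) =
      mmult L (smult ((2 * exp (-l)) ^ k) (tbarA g L mu l k))
       (smult (2 * exp (-l)) (Rop g (l + mu (Suc k)) (Suc k)))" for l
    by (simp add: mmult_smult mult.commute)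
  show ?case unfolding e tb0.simps tb1.simps
    by (rule asym_mmult[where L=L, OF Suc.IH asym_Rop[of g "mu (Suc k)" "Suc k"]])
qed

definition Tm0 :: mop where "Tm0 = mmult L (mmult L (ta0 L) (K0 h)) (tb0 L)"
definition Tm1 :: mop where
  "Tm1 = (\<lambda>a b s u. mmult L (mmult L (ta1 L) (K0 h)) (tb0 L) a b s u
                     + mmult L (mmult L (ta0 L) (K0 h)) (tb1 L) a b s u)"

lemma mmult_mzero: "mmult L A mzero = mzero" "mmult L mzero A = mzero"
  unfolding mmult_def qmult_def mzero_def by simp_all

lemma pow_split: "(x::complex) ^ (2 * L + 1) = x ^ L * x * x ^ L"
proof -
  have "2 * L + 1 = L + 1 + L" by simp
  then show ?thesis by (simp only: power_add power_one_right)
qed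

lemma mmult_zero0: "mmult L A (\<lambda>a b s u. 0) = (\<lambda>a b s u. 0)"
  unfolding mmult_def qmult_def by simp

lemma asym_Tmon: "asym (\<lambda>l. smult ((2 * exp (-l)) ^ (2 * L + 1)) (Tmon g h L mu l)) Tm0 Tm1"
proof -
  have e: "smult ((2 * exp (-l)) ^ (2 * L + 1)) (Tmon g h L mu l) =
     mmult L (mmult L (smult ((2 * exp (-l)) ^ L) (tauA g L mu l L)) (smult (2 * exp (-l)) (Kop h l)))
        (smult ((2 * exp (-l)) ^ L) (tbarA g L mu l L))" for l
    unfolding mmult_smult Tmon_def tau_def tbar_def pow_split ..
  have A: "asym (\<lambda>l. smult ((2 * exp (-l)) ^ (2 * L + 1)) (Tmon g h L mu l)) Tm0
     (\<lambda>a b s u. mmult L (\<lambda>a b s u. mmult L (ta1 L) (K0 h) a b s u + mmult L (ta0 L) mzero a b s u) (tb0 L) a b s u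
        + mmult L (mmult L (ta0 L) (K0 h)) (tb1 L) a b s u)"
    unfolding e Tm0_def
    by (rule asym_mmult[where L=L, OF asym_mmult[where L=L, OF asym_tau[of L] asym_Kop[of h]] asym_tbar[of L]])
  have "(\<lambda>a b s u. mmult L (ta1 L) (K0 h) a b s u + mmult L (ta0 L) mzero a b s u) = mmult L (ta1 L) (K0 h)"
    unfolding mmult_mzero by (simp add: mzero_def)
  with A show ?thesis unfolding Tm1_def by simp
qed

end


definition adiag :: "mop \<Rightarrow> bool" where
  "adiag M \<longleftrightarrow> (\<forall>a b s u. a \<noteq> b \<longrightarrow> M a b s u = 0)"

lemma adiag_mmult: "adiag A \<Longrightarrow> adiag B \<Longrightarrow> adiag (mmult L A B)"
  unfolding adiag_def mmult_def qmult_def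
proof (intro allI impI)
  fix a b s u assume A: "\<forall>a b s u. a \<noteq> b \<longrightarrow> A a b s u = 0" and B: "\<forall>a b s u. a \<noteq> b \<longrightarrow> B a b s u = 0"
    and ab: "(a::bool) \<noteq> b"
  have "(\<Sum>v\<in>states L. A a c s v * B c b v u) = 0" for c
    using A B ab by (cases "c = a") auto
  then show "(\<Sum>c\<in>UNIV. \<Sum>v\<in>states L. A a c s v * B c b v u) = 0" by simp
qed

lemma adiag_mid: "adiag mid" unfolding adiag_def mid_def by simp
lemma adiag_R0: "adiag (R0 g \<nu> j)" unfolding adiag_def R0_def Rent0_def by auto
lemma adiag_K0: "adiag (K0 h)" unfolding adiag_def K0_def by auto

lemma adiag_ta0: "adiag (ta0 g L mu k)"
  by (induction k) (simp_all add: adiag_mid adiag_mmult adiag_R0)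
lemma adiag_tb0: "adiag (tb0 g L mu k)"
  by (induction k) (simp_all add: adiag_mid adiag_mmult adiag_R0)
lemma Tm0_FT: "Tm0 g h L mu False True s u = 0"
proof -
  have "adiag (Tm0 g h L mu)" unfolding Tm0_def
    by (intro adiag_mmult adiag_ta0 adiag_tb0 adiag_K0)
  then show ?thesis unfolding adiag_def by (metis (full_types))
qed

lemma norm_id: "exp l * (2 * exp (-l)) ^ (2 * L + 1) / 2 ^ (2 * L + 1) = 1 / exp (2 * l) ^ L"
  for l :: complex
proof -
  have e2: "exp (2 * l) = exp l ^ 2"
    by (metis exp_add mult_2 power2_eq_square)
  have "exp (2 * l) ^ L = exp l ^ (2 * L)"
    unfolding e2 power_mult ..
  moreover have "exp l * (2 * exp (-l)) ^ (2 * L + 1) / 2 ^ (2 * L + 1) = 1 / exp l ^ (2 * L)"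
  proof -
    have "(2 * exp (-l)) ^ (2 * L + 1) = 2 ^ (2 * L + 1) * (exp (-l) ^ (2 * L) * exp (-l))"
      unfolding power_mult_distrib by simp
    moreover have "exp (-l) ^ (2 * L) = 1 / exp l ^ (2 * L)"
      by (simp add: exp_minus power_inverse divide_inverse)
    moreover have "exp l * exp (-l) = 1" by (simp add: exp_minus)
    ultimately show ?thesis by (simp add: field_simps)
  qed
  ultimately show ?thesis by simp
qed

lemma Blim: "((\<lambda>l. Bop g h L mu l s u / exp (2 * l) ^ L) \<longlongrightarrow> Tm1 g h L mu False True s u / 2 ^ (2 * L + 1)) G"
proof -
  have "((\<lambda>l. exp l * (smult ((2 * exp (-l)) ^ (2 * L + 1)) (Tmon g h L mu l) False True s u
      - Tm0 g h L mu False True s u)) \<longlongrightarrow> Tm1 g h L mu False True s u) G"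
    using asym_Tmon unfolding asym_def by blast
  then have "((\<lambda>l. exp l * ((2 * exp (-l)) ^ (2 * L + 1) * Bop g h L mu l s u) / 2 ^ (2 * L + 1))
      \<longlongrightarrow> Tm1 g h L mu False True s u / 2 ^ (2 * L + 1)) G"
    unfolding Tm0_FT smult_def Bop_def by (intro tendsto_divide) (simp_all del: power_Suc)
  moreover have "exp l * ((2 * exp (-l)) ^ (2 * L + 1) * Bop g h L mu l s u) / 2 ^ (2 * L + 1)
     = Bop g h L mu l s u / exp (2 * l) ^ L" for l
    using norm_id[of l L] by (simp add: field_simps)
  ultimately show ?thesis by simp
qed

definition Fl :: "nat \<Rightarrow> (nat \<Rightarrow> complex) filter" where
  "Fl L = (INF M. principal {lams. \<forall>i\<in>{1..L}. M \<le> Re (lams i)})"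

lemma filterlim_Fl: "i \<in> {1..L} \<Longrightarrow> filterlim (\<lambda>lams. lams i) G (Fl L)"
  unfolding filterlim_def le_filter_def eventually_filtermap
proof (intro allI impI)
  fix P assume i: "i \<in> {1..L}" and "eventually P G"
  then obtain Q where Q: "eventually Q at_top" "\<forall>x. Q (Re x) \<longrightarrow> P x"
    unfolding G_def eventually_filtercomap by auto
  then obtain N where N: "\<forall>n\<ge>N. Q n" unfolding eventually_at_top_linorder by auto
  show "eventually (\<lambda>lams. P (lams i)) (Fl L)"
    unfolding Fl_def
    by (rule eventually_INF1[where i=N]) (use i N Q in \<open>auto simp: eventually_principal\<close>)
qed

context fixes g h :: complex and L :: nat and mu :: "nat \<Rightarrow> complex"
begin

definition B1 :: qop where "B1 = (\<lambda>s u. Tm1 g h L mu False True s u / 2 ^ (2 * L + 1))"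

fun Pw :: "nat \<Rightarrow> qop" where
  "Pw 0 = qid"
| "Pw (Suc k) = qmult L (Pw k) B1"

definition BN :: "(nat \<Rightarrow> complex) \<Rightarrow> nat \<Rightarrow> qop" where
  "BN lams k = (\<lambda>s u. Bprod g h L mu lams k s u / (\<Prod>i=1..k. exp (2 * lams i) ^ L))"

lemma BN_Suc: "BN lams (Suc k) s u =
   (\<Sum>v\<in>states L. BN lams k s v * (Bop g h L mu (lams (Suc k)) v u / exp (2 * lams (Suc k)) ^ L))"
  unfolding BN_def by (simp add: qmult_def sum_divide_distrib)

lemma BN_lim: "k \<le> L \<Longrightarrow> ((\<lambda>lams. BN lams k s u) \<longlongrightarrow> Pw k s u) (Fl L)"
proof (induction k arbitrary: s u)
  case 0
  then show ?case by (simp add: BN_def)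
next
  case (Suc k)
  have i: "Suc k \<in> {1..L}" using Suc.prems by auto
  have bl: "((\<lambda>lams. Bop g h L mu (lams (Suc k)) v u / exp (2 * lams (Suc k)) ^ L) \<longlongrightarrow> B1 v u) (Fl L)" for v
    unfolding B1_def using filterlim_compose[OF Blim filterlim_Fl[OF i]] .
  show ?case unfolding BN_Suc Pw.simps qmult_def
    by (intro tendsto_sum tendsto_mult Suc.IH bl) (use Suc.prems in auto)
qed

end



lemma finite_states: "finite (states L)"
proof -
  have "states L = {xs. set xs \<subseteq> UNIV \<and> length xs = L}" unfolding states_def by auto
  then show ?thesis using finite_lists_length_eq[of "UNIV :: bool set" L] by simp
qed

lemma sum_states_delta: "length s = L \<Longrightarrow> (\<Sum>v\<in>states L. (if v = s then f v else 0)) = (f s :: complex)"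
  using finite_states[of L] by (simp add: states_def)

lemma nth_eq_upd: "length s = length u \<Longrightarrow> p < length u \<Longrightarrow>
   (\<forall>k<length s. k \<noteq> p \<longrightarrow> s ! k = u ! k) \<and> s ! p = x \<longleftrightarrow> s = u[p := x]"
  by (auto simp: list_eq_iff_nth_eq nth_list_update)

lemma R0_st: "length s = L \<Longrightarrow> length u = L \<Longrightarrow> p < L \<Longrightarrow>
   R0 g \<nu> (Suc p) a b s u = (if a = b \<and> s = u then exp \<nu> * (if s ! p = a then exp g else 1) else 0)"
proof -
  assume l: "length s = L" "length u = L" "p < L"
  have e: "ropc (Suc p) s u \<and> s ! p = u ! p \<longleftrightarrow> s = u"
    using nth_eq_upd[of s u p "u ! p"] l unfolding ropc_def by auto
  show ?thesis unfolding R0_def Rent0_def using e by (cases a; cases b; auto simp: exp_add)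
qed

lemma R1_st: "length s = L \<Longrightarrow> length u = L \<Longrightarrow> p < L \<Longrightarrow>
   R1 g (Suc p) a b s u = (if a \<noteq> b \<and> u ! p = a \<and> s = u[p := b] then 2 * sinh g else 0)"
proof -
  assume l: "length s = L" "length u = L" "p < L"
  have e: "ropc (Suc p) s u \<and> s ! p = b \<longleftrightarrow> s = u[p := b]"
    using nth_eq_upd[of s u p b] l unfolding ropc_def by auto
  show ?thesis unfolding R1_def Rent1_def using e l by (cases a; cases b; auto)
qed

lemma mmult_diagL:
  assumes "length s = L" "\<And>c v. length v = L \<Longrightarrow> A a c s v = (if c = a \<and> v = s then d else 0)"
  shows "mmult L A B a b s u = d * B a b s u"
proof -
  have "(\<Sum>v\<in>states L. A a c s v * B c b v u) = (if c = a then d * B a b s u else 0)" for c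
  proof -
    have "(\<Sum>v\<in>states L. A a c s v * B c b v u) = (\<Sum>v\<in>states L. if v = s then (if c = a then d * B c b v u else 0) else 0)"
      by (rule sum.cong) (auto simp: assms(2) states_def)
    also have "\<dots> = (if c = a then d * B a b s u else 0)" using sum_states_delta[OF assms(1)] by auto
    finally show ?thesis .
  qed
  then show ?thesis unfolding mmult_def qmult_def by simp
qed

lemma mmult_diagR:
  assumes "length u = L" "\<And>c v. length v = L \<Longrightarrow> B c b v u = (if c = b \<and> v = u then d else 0)"
  shows "mmult L A B a b s u = A a b s u * d"
proof -
  have "(\<Sum>v\<in>states L. A a c s v * B c b v u) = (if c = b then A a b s u * d else 0)" for c
  proof -
    have "(\<Sum>v\<in>states L. A a c s v * B c b v u) = (\<Sum>v\<in>states L. if v = u then (if c = b then A a c s v * d else 0) else 0)"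
      by (rule sum.cong) (auto simp: assms(2) states_def)
    also have "\<dots> = (if c = b then A a b s u * d else 0)" using sum_states_delta[OF assms(1)] by auto
    finally show ?thesis .
  qed
  then show ?thesis unfolding mmult_def qmult_def by simp
qed

lemma mmult_R1L:
  assumes "length s = L" "p < L"
  shows "mmult L (R1 g (Suc p)) B a b s u = (if s ! p \<noteq> a then 2 * sinh g * B (\<not> a) b (s[p := a]) u else 0)"
proof -
  have sw: "length v = L \<Longrightarrow> (v ! p = a \<and> s = v[p := c]) \<longleftrightarrow> (s ! p = c \<and> v = s[p := a])" for v c
    using assms by (auto simp: list_eq_iff_nth_eq nth_list_update)
  have "(\<Sum>v\<in>states L. R1 g (Suc p) a c s v * B c b v u) = (if a \<noteq> c \<and> s ! p = c then 2 * sinh g * B c b (s[p := a]) u else 0)" for c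
  proof -
    have "(\<Sum>v\<in>states L. R1 g (Suc p) a c s v * B c b v u) =
        (\<Sum>v\<in>states L. if v = s[p := a] then (if a \<noteq> c \<and> s ! p = c then 2 * sinh g * B c b v u else 0) else 0)"
      by (rule sum.cong) (use assms sw in \<open>auto simp: R1_st states_def\<close>)
    also have "\<dots> = (if a \<noteq> c \<and> s ! p = c then 2 * sinh g * B c b (s[p := a]) u else 0)"
      using sum_states_delta[of "s[p := a]" L] assms by auto
    finally show ?thesis .
  qed
  then show ?thesis unfolding mmult_def qmult_def by (cases a; auto simp: UNIV_bool)
qed

lemma mmult_R1R:
  assumes "length u = L" "p < L"
  shows "mmult L A (R1 g (Suc p)) a b s u = (if u ! p \<noteq> b then A a (\<not> b) s (u[p := b]) * (2 * sinh g) else 0)"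
proof -
  have "(\<Sum>v\<in>states L. A a c s v * R1 g (Suc p) c b v u) = (if c \<noteq> b \<and> u ! p = c then A a c s (u[p := b]) * (2 * sinh g) else 0)" for c
  proof -
    have "(\<Sum>v\<in>states L. A a c s v * R1 g (Suc p) c b v u) =
        (\<Sum>v\<in>states L. if v = u[p := b] then (if c \<noteq> b \<and> u ! p = c then A a c s v * (2 * sinh g) else 0) else 0)"
      by (rule sum.cong) (use assms in \<open>auto simp: R1_st states_def\<close>)
    also have "\<dots> = (if c \<noteq> b \<and> u ! p = c then A a c s (u[p := b]) * (2 * sinh g) else 0)"
      using sum_states_delta[of "u[p := b]" L] assms by auto
    finally show ?thesis .
  qed
  then show ?thesis unfolding mmult_def qmult_def by (cases b; auto simp: UNIV_bool)
qed



definition wt :: "complex \<Rightarrow> complex \<Rightarrow> bool \<Rightarrow> bool \<Rightarrow> complex" where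
  "wt g \<nu> a x = exp \<nu> * (if x = a then exp g else 1)"

lemma ta0_st: "k \<le> L \<Longrightarrow> length s = L \<Longrightarrow> length u = L \<Longrightarrow>
  ta0 g L mu k a b s u = (if a = b \<and> s = u then \<Prod>i<k. wt g (- mu (Suc i)) a (s ! i) else 0)"
proof (induction k arbitrary: a b)
  case 0
  then show ?case by (simp add: mid_def qid_def)
next
  case (Suc k)
  have "ta0 g L mu (Suc k) a b s u = wt g (- mu (Suc k)) a (s ! k) * ta0 g L mu k a b s u"
    unfolding ta0.simps
    by (rule mmult_diagL) (use Suc.prems in \<open>auto simp: R0_st wt_def\<close>)
  then show ?case using Suc by (simp add: mult.commute)
qed

lemma tb0_st: "k \<le> L \<Longrightarrow> length s = L \<Longrightarrow> length u = L \<Longrightarrow>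
  tb0 g L mu k a b s u = (if a = b \<and> s = u then \<Prod>i<k. wt g (mu (Suc i)) a (s ! i) else 0)"
proof (induction k arbitrary: a b)
  case 0
  then show ?case by (simp add: mid_def qid_def)
next
  case (Suc k)
  have "tb0 g L mu (Suc k) a b s u = tb0 g L mu k a b s u * wt g (mu (Suc k)) b (u ! k)"
    unfolding tb0.simps
    by (rule mmult_diagR) (use Suc.prems in \<open>auto simp: R0_st wt_def\<close>)
  then show ?case using Suc by auto
qed

lemma upd_iff: "length s = length u \<Longrightarrow> k < length u \<Longrightarrow>
   (s ! k \<and> s[k := False] = u) \<longleftrightarrow> (\<not> u ! k \<and> s = u[k := True])"
  by (auto simp: list_eq_iff_nth_eq nth_list_update)

lemma prod_ivl_Suc: "i < k \<Longrightarrow> (\<Prod>j\<in>{i<..<Suc k}. f j) = (\<Prod>j\<in>{i<..<k}. f j) * (f k :: complex)"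
proof -
  assume "i < k"
  then have "{i<..<Suc k} = insert k {i<..<k}" by auto
  then show ?thesis by (simp add: mult.commute)
qed

lemma ta1_st: "k \<le> L \<Longrightarrow> length s = L \<Longrightarrow> length u = L \<Longrightarrow>
  ta1 g L mu k False True s u = (\<Sum>i<k. if \<not> u ! i \<and> s = u[i := True] then
     2 * sinh g * (\<Prod>j<i. wt g (- mu (Suc j)) True (u ! j)) * (\<Prod>j\<in>{i<..<k}. wt g (- mu (Suc j)) False (u ! j)) else 0)"
proof (induction k)
  case 0
  then show ?case by (simp add: mzero_def)
next
  case (Suc k)
  have k: "k < L" "k \<le> L" using Suc.prems by auto
  have A: "mmult L (R1 g (Suc k)) (ta0 g L mu k) False True s u =
     (if \<not> u ! k \<and> s = u[k := True] then 2 * sinh g * (\<Prod>j<k. wt g (- mu (Suc j)) True (u ! j)) else 0)"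
    unfolding mmult_R1L[OF Suc.prems(2) k(1)]
    using ta0_st[OF k(2), where s="s[k := False]" and u=u and a=True and b=True] upd_iff[of s u k] Suc.prems k by auto
  have B: "mmult L (R0 g (- mu (Suc k)) (Suc k)) (ta1 g L mu k) False True s u =
      wt g (- mu (Suc k)) False (s ! k) * ta1 g L mu k False True s u"
    by (rule mmult_diagL) (use Suc.prems k in \<open>auto simp: R0_st wt_def\<close>)
  have C: "wt g (- mu (Suc k)) False (s ! k) * ta1 g L mu k False True s u =
     (\<Sum>i<k. if \<not> u ! i \<and> s = u[i := True] then
     2 * sinh g * (\<Prod>j<i. wt g (- mu (Suc j)) True (u ! j)) * (\<Prod>j\<in>{i<..<Suc k}. wt g (- mu (Suc j)) False (u ! j)) else 0)"
    unfolding Suc.IH[OF k(2) Suc.prems(2,3)] sum_distrib_left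
    by (rule sum.cong) (auto simp: prod_ivl_Suc nth_list_update)
  have E: "{k<..<Suc k} = {}" by auto
  show ?case unfolding ta1.simps A B C by (simp add: E)
qed

lemma tb1_st: "k \<le> L \<Longrightarrow> length s = L \<Longrightarrow> length u = L \<Longrightarrow>
  tb1 g L mu k False True s u = (\<Sum>i<k. if \<not> u ! i \<and> s = u[i := True] then
     2 * sinh g * (\<Prod>j<i. wt g (mu (Suc j)) False (s ! j)) * (\<Prod>j\<in>{i<..<k}. wt g (mu (Suc j)) True (u ! j)) else 0)"
proof (induction k)
  case 0
  then show ?case by (simp add: mzero_def)
next
  case (Suc k)
  have k: "k < L" "k \<le> L" using Suc.prems by auto
  have A: "mmult L (tb0 g L mu k) (R1 g (Suc k)) False True s u =
     (if \<not> u ! k \<and> s = u[k := True] then 2 * sinh g * (\<Prod>j<k. wt g (mu (Suc j)) False (s ! j)) else 0)"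
  proof -
    have t: "tb0 g L mu k False False s (u[k := True]) = (if s = u[k := True] then \<Prod>j<k. wt g (mu (Suc j)) False (s ! j) else 0)"
      using tb0_st[OF k(2), where s=s and u="u[k := True]" and a=False and b=False] Suc.prems by simp
    show ?thesis unfolding mmult_R1R[OF Suc.prems(3) k(1)] not_True_eq_False t by simp
  qed
  have B: "mmult L (tb1 g L mu k) (R0 g (mu (Suc k)) (Suc k)) False True s u =
      tb1 g L mu k False True s u * wt g (mu (Suc k)) True (u ! k)"
    by (rule mmult_diagR) (use Suc.prems k in \<open>auto simp: R0_st wt_def\<close>)
  have C: "tb1 g L mu k False True s u * wt g (mu (Suc k)) True (u ! k) =
     (\<Sum>i<k. if \<not> u ! i \<and> s = u[i := True] then
     2 * sinh g * (\<Prod>j<i. wt g (mu (Suc j)) False (s ! j)) * (\<Prod>j\<in>{i<..<Suc k}. wt g (mu (Suc j)) True (u ! j)) else 0)"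
    unfolding Suc.IH[OF k(2) Suc.prems(2,3)] sum_distrib_right
    by (rule sum.cong) (auto simp: prod_ivl_Suc)
  have E: "{k<..<Suc k} = {}" by auto
  show ?case unfolding tb1.simps A B C by (simp add: E)
qed



lemma Tm1_st: "length s = L \<Longrightarrow> length u = L \<Longrightarrow>
  Tm1 g h L mu False True s u =
    ta1 g L mu L False True s u * (- exp (-h)) * (\<Prod>i<L. wt g (mu (Suc i)) True (u ! i))
  + (\<Prod>i<L. wt g (- mu (Suc i)) False (s ! i)) * exp h * tb1 g L mu L False True s u"
proof -
  assume l: "length s = L" "length u = L"
  have p1: "mmult L (mmult L (ta1 g L mu L) (K0 h)) (tb0 g L mu L) False True s u =
      mmult L (ta1 g L mu L) (K0 h) False True s u * (\<Prod>i<L. wt g (mu (Suc i)) True (u ! i))"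
    by (rule mmult_diagR) (use l in \<open>auto simp: tb0_st\<close>)
  have p2: "mmult L (ta1 g L mu L) (K0 h) False True s u = ta1 g L mu L False True s u * (- exp (-h))"
    by (rule mmult_diagR) (use l in \<open>auto simp: K0_def qid_def\<close>)
  have p3: "mmult L (ta0 g L mu L) (K0 h) False c s v =
     (if c = False \<and> v = s then (\<Prod>i<L. wt g (- mu (Suc i)) False (s ! i)) * exp h else 0)"
    if "length v = L" for c v
  proof -
    have "mmult L (ta0 g L mu L) (K0 h) False c s v = (\<Prod>i<L. wt g (- mu (Suc i)) False (s ! i)) * K0 h False c s v"
      by (rule mmult_diagL) (use l in \<open>auto simp: ta0_st\<close>)
    then show ?thesis by (auto simp: K0_def qid_def)
  qed
  have p4: "mmult L (mmult L (ta0 g L mu L) (K0 h)) (tb1 g L mu L) False True s u =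
     (\<Prod>i<L. wt g (- mu (Suc i)) False (s ! i)) * exp h * tb1 g L mu L False True s u"
    by (rule mmult_diagL) (use l p3 in auto)
  show ?thesis unfolding Tm1_def p1 p2 p4 ..
qed

definition nF :: "bool list \<Rightarrow> nat \<Rightarrow> nat" where
  "nF u i = card {j. j < i \<and> \<not> u ! j}"

definition W :: "complex \<Rightarrow> complex \<Rightarrow> nat \<Rightarrow> (nat \<Rightarrow> complex) \<Rightarrow> nat \<Rightarrow> nat \<Rightarrow> complex" where
  "W g h L mu i n = (exp g - 1 / exp g) * exp g ^ (L - 1 - i) *
     (exp h * exp (- mu (Suc i)) * (exp g ^ 2) ^ n - exp (mu (Suc i)) / exp h * (exp g ^ 2) ^ (i - n))"

lemma split3: "p < (n::nat) \<Longrightarrow> (\<Prod>j<n. f j) = (\<Prod>j<p. f j) * f p * (\<Prod>j\<in>{p<..<n}. f j :: complex)"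
proof -
  assume "p < n"
  then have "{..<n} = {..<p} \<union> ({p} \<union> {p<..<n})"
    by auto
  moreover have "(\<Prod>j\<in>{..<p} \<union> ({p} \<union> {p<..<n}). f j) = (\<Prod>j<p. f j) * (\<Prod>j\<in>{p} \<union> {p<..<n}. f j)"
    by (rule prod.union_disjoint) auto
  moreover have "(\<Prod>j\<in>{p} \<union> {p<..<n}. f j) = (\<Prod>j\<in>{p}. f j) * (\<Prod>j\<in>{p<..<n}. f j)"
    by (rule prod.union_disjoint) auto
  ultimately show ?thesis by (simp add: mult.assoc)
qed

lemma prod_if_pow: "(\<Prod>j<(i::nat). if P j then c else 1) = (c :: complex) ^ card {j. j < i \<and> P j}"
proof -
  have e: "(\<Prod>j\<in>{x\<in>{..<i}. P x}. c) = (\<Prod>j<i. if P j then c else 1)"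
    by (rule prod.inter_filter) simp
  moreover have "{x\<in>{..<i}. P x} = {j. j < i \<and> P j}" by auto
  ultimately show ?thesis by simp
qed

lemma card_T: "card {j. j < i \<and> u ! j} = i - nF u i"
proof -
  have "{j. j < i \<and> u ! j} = {..<i} - {j. j < i \<and> \<not> u ! j}" by auto
  moreover have "{j. j < i \<and> \<not> u ! j} \<subseteq> {..<i}" by auto
  moreover have "finite {j. j < i \<and> \<not> u ! j}" by simp
  ultimately show ?thesis unfolding nF_def by (simp add: card_Diff_subset)
qed

lemma term_id:
  assumes i: "i < L" and l: "length u = L" and ui: "\<not> u ! i" and s: "s = u[i := True]"
  shows "2 * sinh g * (\<Prod>j<i. wt g (- mu (Suc j)) True (u ! j)) * (\<Prod>j\<in>{i<..<L}. wt g (- mu (Suc j)) False (u ! j))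
       * (- exp (-h)) * (\<Prod>j<L. wt g (mu (Suc j)) True (u ! j))
     + (\<Prod>j<L. wt g (- mu (Suc j)) False (s ! j)) * exp h *
       (2 * sinh g * (\<Prod>j<i. wt g (mu (Suc j)) False (s ! j)) * (\<Prod>j\<in>{i<..<L}. wt g (mu (Suc j)) True (u ! j)))
     = W g h L mu i (nF u i)"
proof -
  define q where "q = exp g"
  define n where "n = nF u i"
  have sj: "j \<noteq> i \<Longrightarrow> s ! j = u ! j" for j using s by simp
  have si: "s ! i" using s i l by simp
  have w1: "wt g (- x) a y * wt g x a y = (if y = a then q ^ 2 else 1)" for x a y
    by (simp add: wt_def q_def exp_minus power2_eq_square field_simps)
  have w2: "wt g (- x) False y * wt g x True y = q" for x y
    by (cases y) (simp_all add: wt_def q_def exp_minus field_simps)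
  have A: "(\<Prod>j<i. wt g (- mu (Suc j)) True (u ! j)) * (\<Prod>j<i. wt g (mu (Suc j)) True (u ! j)) = (q ^ 2) ^ (i - n)"
    unfolding prod.distrib[symmetric] w1 by (simp add: prod_if_pow card_T n_def)
  have B: "(\<Prod>j<i. wt g (- mu (Suc j)) False (s ! j)) * (\<Prod>j<i. wt g (mu (Suc j)) False (s ! j)) = (q ^ 2) ^ n"
  proof -
    have "(\<Prod>j<i. wt g (- mu (Suc j)) False (s ! j)) * (\<Prod>j<i. wt g (mu (Suc j)) False (s ! j))
       = (\<Prod>j<i. if \<not> u ! j then q ^ 2 else 1)"
      unfolding prod.distrib[symmetric] w1 by (rule prod.cong) (auto simp: sj)
    then show ?thesis unfolding prod_if_pow n_def nF_def .
  qed
  have C: "(\<Prod>j\<in>{i<..<L}. wt g (- mu (Suc j)) False (u ! j)) * (\<Prod>j\<in>{i<..<L}. wt g (mu (Suc j)) True (u ! j))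
      = q ^ (L - 1 - i)"
    unfolding prod.distrib[symmetric] w2 by simp
  have C': "(\<Prod>j\<in>{i<..<L}. wt g (- mu (Suc j)) False (s ! j)) = (\<Prod>j\<in>{i<..<L}. wt g (- mu (Suc j)) False (u ! j))"
    by (rule prod.cong) (auto simp: sj)
  have D1: "wt g (mu (Suc i)) True (u ! i) = exp (mu (Suc i))" using ui by (simp add: wt_def)
  have D2: "wt g (- mu (Suc i)) False (s ! i) = exp (- mu (Suc i))" using si by (simp add: wt_def)
  have sh: "2 * sinh g = q - 1 / q" by (simp add: sinh_field_def q_def exp_minus inverse_eq_divide)
  have eh: "exp (- h) = 1 / exp h" by (simp add: exp_minus divide_inverse)
  define P1 where "P1 = (\<Prod>j<i. wt g (- mu (Suc j)) True (u ! j))"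
  define P2 where "P2 = (\<Prod>j<i. wt g (mu (Suc j)) True (u ! j))"
  define P3 where "P3 = (\<Prod>j\<in>{i<..<L}. wt g (- mu (Suc j)) False (u ! j))"
  define P4 where "P4 = (\<Prod>j\<in>{i<..<L}. wt g (mu (Suc j)) True (u ! j))"
  define S1 where "S1 = (\<Prod>j<i. wt g (- mu (Suc j)) False (s ! j))"
  define S2 where "S2 = (\<Prod>j<i. wt g (mu (Suc j)) False (s ! j))"
  have lhs: "(\<Prod>j<L. wt g (mu (Suc j)) True (u ! j)) = P2 * exp (mu (Suc i)) * P4"
    unfolding split3[OF i] D1 P2_def P4_def ..
  have lhs2: "(\<Prod>j<L. wt g (- mu (Suc j)) False (s ! j)) = S1 * exp (- mu (Suc i)) * P3"
    unfolding split3[OF i] D2 C' S1_def P3_def ..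
  have A': "P1 * P2 = (q ^ 2) ^ (i - n)" using A unfolding P1_def P2_def .
  have B': "S1 * S2 = (q ^ 2) ^ n" using B unfolding S1_def S2_def .
  have C'': "P3 * P4 = q ^ (L - 1 - i)" using C unfolding P3_def P4_def .
  have "2 * sinh g * P1 * P3 * (- exp (-h)) * (P2 * exp (mu (Suc i)) * P4)
     + (S1 * exp (- mu (Suc i)) * P3) * exp h * (2 * sinh g * S2 * P4)
     = 2 * sinh g * (- exp (-h)) * exp (mu (Suc i)) * (P1 * P2) * (P3 * P4)
       + 2 * sinh g * exp h * exp (- mu (Suc i)) * (S1 * S2) * (P3 * P4)"
    by (simp add: algebra_simps)
  also have "\<dots> = W g h L mu i n"
  proof -
    have q0: "q \<noteq> 0" "exp h \<noteq> 0" by (simp_all add: q_def)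
    show ?thesis
      unfolding A' B' C'' W_def sh eh q_def[symmetric] using q0 by (simp add: field_simps)
  qed
  finally show ?thesis unfolding lhs lhs2 n_def P1_def P2_def P3_def P4_def S1_def S2_def .
qed



lemma B1_st: "length s = L \<Longrightarrow> length u = L \<Longrightarrow>
  B1 g h L mu s u = (\<Sum>i<L. if \<not> u ! i \<and> s = u[i := True] then W g h L mu i (nF u i) / 2 ^ (2 * L + 1) else 0)"
proof -
  assume l: "length s = L" "length u = L"
  have "Tm1 g h L mu False True s u = (\<Sum>i<L. if \<not> u ! i \<and> s = u[i := True] then W g h L mu i (nF u i) else 0)"
    unfolding Tm1_st[OF l] ta1_st[OF le_refl l] tb1_st[OF le_refl l] sum_distrib_right sum_distrib_left
      sum.distrib[symmetric]
  proof (rule sum.cong[OF refl])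
    fix i assume i: "i \<in> {..<L}"
    show "(if \<not> u ! i \<and> s = u[i := True]
          then 2 * sinh g * (\<Prod>j<i. wt g (- mu (Suc j)) True (u ! j)) * (\<Prod>j\<in>{i<..<L}. wt g (- mu (Suc j)) False (u ! j)) else 0) *
         - exp (- h) * (\<Prod>i<L. wt g (mu (Suc i)) True (u ! i)) +
         (\<Prod>i<L. wt g (- mu (Suc i)) False (s ! i)) * exp h *
         (if \<not> u ! i \<and> s = u[i := True]
          then 2 * sinh g * (\<Prod>j<i. wt g (mu (Suc j)) False (s ! j)) * (\<Prod>j\<in>{i<..<L}. wt g (mu (Suc j)) True (u ! j)) else 0) =
         (if \<not> u ! i \<and> s = u[i := True] then W g h L mu i (nF u i) else 0)"
    proof (cases "\<not> u ! i \<and> s = u[i := True]")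
      case True
      have P: "\<not> u ! i \<and> s = u[i := True]" using True .
      show ?thesis unfolding if_P[OF P]
        by (rule term_id) (use True i l in auto)
    next
      case False
      show ?thesis unfolding if_not_P[OF False] by simp
    qed
  qed
  then show ?thesis unfolding B1_def by (simp only: sum_divide_distrib) (intro sum.cong, auto)
qed



definition cb :: "nat set \<Rightarrow> nat \<Rightarrow> nat" where "cb S i = card {j \<in> S. j < i}"

lemma comb_id:
  fixes V :: "nat \<Rightarrow> nat \<Rightarrow> complex"
  assumes "finite S"
  shows "S \<noteq> {} \<longrightarrow> (\<Prod>i\<in>S. \<Sum>m\<le>cb S i. V i m) =
    (\<Sum>i\<in>S. V i (cb S i) * (\<Prod>k\<in>S - {i}. \<Sum>m\<le>cb (S - {i}) k. V k m))"
  using assms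
proof (induction S rule: finite_linorder_max_induct)
  case empty
  then show ?case by simp
next
  case (insert b A)
  let ?S = "insert b A"
  let ?H = "\<lambda>i n. \<Sum>m\<le>n. V i m"
  have bA: "b \<notin> A" using insert.hyps by auto
  have cbS: "cb ?S i = cb A i" if "i \<in> A" for i
  proof -
    have "{j \<in> ?S. j < i} = {j \<in> A. j < i}" using insert.hyps that by auto
    then show ?thesis unfolding cb_def by simp
  qed
  have cbb: "cb ?S b = card A"
  proof -
    have "{j \<in> ?S. j < b} = A" using insert.hyps by auto
    then show ?thesis unfolding cb_def by simp
  qed
  have LHS: "(\<Prod>i\<in>?S. ?H i (cb ?S i)) = ?H b (card A) * (\<Prod>i\<in>A. ?H i (cb A i))"
    using insert.hyps bA by (simp add: cbS cbb)
  have term_b: "V b (cb ?S b) * (\<Prod>k\<in>?S - {b}. ?H k (cb (?S - {b}) k)) = V b (card A) * (\<Prod>i\<in>A. ?H i (cb A i))"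
    unfolding cbb using bA by simp
  have term_i: "V i (cb ?S i) * (\<Prod>k\<in>?S - {i}. ?H k (cb (?S - {i}) k)) =
      ?H b (card A - 1) * (V i (cb A i) * (\<Prod>k\<in>A - {i}. ?H k (cb (A - {i}) k)))" if i: "i \<in> A" for i
  proof -
    have ib: "i \<noteq> b" using i bA by auto
    have e1: "?S - {i} = insert b (A - {i})" using ib by auto
    have c1: "cb (insert b (A - {i})) b = card A - 1"
    proof -
      have "{j \<in> insert b (A - {i}). j < b} = A - {i}" using insert.hyps by auto
      then show ?thesis unfolding cb_def using i insert.hyps by simp
    qed
    have c2: "cb (insert b (A - {i})) k = cb (A - {i}) k" if "k \<in> A - {i}" for k
    proof -
      have "{j \<in> insert b (A - {i}). j < k} = {j \<in> A - {i}. j < k}" using insert.hyps that by auto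
      then show ?thesis unfolding cb_def by simp
    qed
    have "(\<Prod>k\<in>?S - {i}. ?H k (cb (?S - {i}) k)) = ?H b (card A - 1) * (\<Prod>k\<in>A - {i}. ?H k (cb (A - {i}) k))"
      unfolding e1 using insert.hyps bA by (simp add: c1 c2)
    then show ?thesis using cbS[OF i] by (simp add: mult_ac)
  qed
  have RHS: "(\<Sum>i\<in>?S. V i (cb ?S i) * (\<Prod>k\<in>?S - {i}. ?H k (cb (?S - {i}) k))) =
     V b (card A) * (\<Prod>i\<in>A. ?H i (cb A i)) + ?H b (card A - 1) * (\<Sum>i\<in>A. V i (cb A i) * (\<Prod>k\<in>A - {i}. ?H k (cb (A - {i}) k)))"
  proof -
    have "(\<Sum>i\<in>?S. V i (cb ?S i) * (\<Prod>k\<in>?S - {i}. ?H k (cb (?S - {i}) k))) =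
       V b (cb ?S b) * (\<Prod>k\<in>?S - {b}. ?H k (cb (?S - {b}) k)) + (\<Sum>i\<in>A. V i (cb ?S i) * (\<Prod>k\<in>?S - {i}. ?H k (cb (?S - {i}) k)))"
      by (rule sum.insert) (use insert.hyps bA in auto)
    also have "\<dots> = V b (card A) * (\<Prod>i\<in>A. ?H i (cb A i)) + (\<Sum>i\<in>A. ?H b (card A - 1) * (V i (cb A i) * (\<Prod>k\<in>A - {i}. ?H k (cb (A - {i}) k))))"
      unfolding term_b by (simp add: term_i)
    finally show ?thesis by (simp add: sum_distrib_left)
  qed
  show ?case
  proof (cases "A = {}")
    case True
    have "{j \<in> {b}. j < b} = {}" by auto
    then have "cb {b} b = 0" unfolding cb_def by (metis card.empty)
    with True show ?thesis by simp
  next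
    case False
    then have IH: "(\<Prod>i\<in>A. ?H i (cb A i)) = (\<Sum>i\<in>A. V i (cb A i) * (\<Prod>k\<in>A - {i}. ?H k (cb (A - {i}) k)))"
      using insert.IH by simp
    have "card A > 0" using False insert.hyps(1) by (simp add: card_gt_0_iff)
    then have cA: "card A = Suc (card A - 1)" by simp
    have Hs: "?H b (Suc n) = ?H b n + V b (Suc n)" for n by simp
    have "?H b (card A) = ?H b (card A - 1) + V b (card A)"
      using Hs[of "card A - 1"] cA by simp
    then show ?thesis unfolding LHS RHS IH[symmetric] by (simp add: algebra_simps)
  qed
qed



definition Sset :: "nat \<Rightarrow> bool list \<Rightarrow> nat set" where
  "Sset L u = {i. i < L \<and> \<not> u ! i}"

lemma nF_cb: "i < L \<Longrightarrow> nF u i = cb (Sset L u) i"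
proof -
  assume "i < L"
  then have "{j. j < i \<and> \<not> u ! j} = {j \<in> Sset L u. j < i}" unfolding Sset_def by auto
  then show ?thesis unfolding nF_def cb_def by simp
qed

lemma finite_Sset: "finite (Sset L u)" unfolding Sset_def by simp

lemma Sset_upd: "i < L \<Longrightarrow> length u = L \<Longrightarrow> Sset L (u[i := True]) = Sset L u - {i}"
  unfolding Sset_def by (auto simp: nth_list_update)

lemma Pw_formula: "length u = L \<Longrightarrow>
  Pw g h L mu k (replicate L True) u =
   (if card (Sset L u) = k then \<Prod>i\<in>Sset L u. \<Sum>m\<le>cb (Sset L u) i. W g h L mu i m / 2 ^ (2 * L + 1) else 0)"
proof (induction k arbitrary: u)
  case 0
  have "card (Sset L u) = 0 \<longleftrightarrow> Sset L u = {}" using finite_Sset by simp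
  also have "\<dots> \<longleftrightarrow> replicate L True = u"
    using 0 unfolding Sset_def by (auto simp: list_eq_iff_nth_eq)
  finally show ?case by (auto simp: qid_def finite_Sset)
next
  case (Suc k)
  let ?V = "\<lambda>i m. W g h L mu i m / 2 ^ (2 * L + 1)"
  let ?S = "Sset L u"
  let ?H = "\<lambda>S i. \<Sum>m\<le>cb S i. ?V i m"
  have l: "length u = L" by fact
  have "Pw g h L mu (Suc k) (replicate L True) u =
     (\<Sum>v\<in>states L. Pw g h L mu k (replicate L True) v *
        (\<Sum>i<L. if \<not> u ! i \<and> v = u[i := True] then ?V i (cb ?S i) else 0))"
  proof -
    have e: "(\<Sum>i<L. if \<not> u ! i \<and> v = u[i := True] then W g h L mu i (nF u i) / 2 ^ (2 * L + 1) else 0) =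
        (\<Sum>i<L. if \<not> u ! i \<and> v = u[i := True] then ?V i (cb ?S i) else 0)" for v
      by (rule sum.cong[OF refl]) (simp add: nF_cb)
    show ?thesis unfolding Pw.simps qmult_def
      by (rule sum.cong[OF refl]) (use l in \<open>simp add: B1_st states_def e\<close>)
  qed
  also have "\<dots> = (\<Sum>i<L. \<Sum>v\<in>states L. if v = u[i := True] then
        (if \<not> u ! i then Pw g h L mu k (replicate L True) v * ?V i (cb ?S i) else 0) else 0)"
    unfolding sum_distrib_left by (subst sum.swap) (rule sum.cong[OF refl], rule sum.cong[OF refl], auto)
  also have "\<dots> = (\<Sum>i<L. if \<not> u ! i then Pw g h L mu k (replicate L True) (u[i := True]) * ?V i (cb ?S i) else 0)"
    by (rule sum.cong[OF refl]) (use l sum_states_delta[of "u[i := True]" L for i] in auto)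
  also have "\<dots> = (\<Sum>i\<in>?S. Pw g h L mu k (replicate L True) (u[i := True]) * ?V i (cb ?S i))"
    unfolding Sset_def by (subst sum.inter_filter[symmetric]) (auto intro: sum.cong)
  also have "\<dots> = (\<Sum>i\<in>?S. (if card (?S - {i}) = k then \<Prod>j\<in>?S - {i}. ?H (?S - {i}) j else 0) * ?V i (cb ?S i))"
  proof (rule sum.cong[OF refl])
    fix i assume i: "i \<in> ?S"
    then have iL: "i < L" unfolding Sset_def by simp
    show "Pw g h L mu k (replicate L True) (u[i := True]) * ?V i (cb ?S i) =
      (if card (?S - {i}) = k then \<Prod>j\<in>?S - {i}. ?H (?S - {i}) j else 0) * ?V i (cb ?S i)"
      using Suc.IH[of "u[i := True]"] l iL by (simp add: Sset_upd)
  qed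
  also have "\<dots> = (if card ?S = Suc k then \<Prod>i\<in>?S. ?H ?S i else 0)"
  proof (cases "card ?S = Suc k")
    case True
    then have ne: "?S \<noteq> {}" by auto
    have c: "card (?S - {i}) = k" if "i \<in> ?S" for i using True that finite_Sset by simp
    have "(\<Sum>i\<in>?S. (if card (?S - {i}) = k then \<Prod>j\<in>?S - {i}. ?H (?S - {i}) j else 0) * ?V i (cb ?S i))
       = (\<Sum>i\<in>?S. ?V i (cb ?S i) * (\<Prod>j\<in>?S - {i}. ?H (?S - {i}) j))"
      by (rule sum.cong[OF refl]) (use True finite_Sset in \<open>simp add: c mult.commute\<close>)
    also have "\<dots> = (\<Prod>i\<in>?S. ?H ?S i)"
      using comb_id[OF finite_Sset, of L u ?V] ne by simp
    finally show ?thesis using True by simp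
  next
    case False
    have c: "card (?S - {i}) \<noteq> k" if "i \<in> ?S" for i
    proof -
      have p: "card ?S > 0" using that finite_Sset card_gt_0_iff by blast
      have "card (?S - {i}) = card ?S - 1" using that by (simp add: card_Diff_singleton)
      then show ?thesis using p False by linarith
    qed
    have "\<forall>i\<in>?S. (if card (?S - {i}) = k then \<Prod>j\<in>?S - {i}. ?H (?S - {i}) j else 0) * ?V i (cb ?S i) = 0"
    proof
      fix i assume i: "i \<in> ?S"
      show "(if card (?S - {i}) = k then \<Prod>j\<in>?S - {i}. ?H (?S - {i}) j else 0) * ?V i (cb ?S i) = 0"
        unfolding if_not_P[OF c[OF i]] by simp
    qed
    then show ?thesis using False by (simp only: sum.neutral if_not_P[OF False] if_False)
  qed
  finally show ?case .
qed

lemma Pw_L: "Pw g h L mu L (replicate L True) (replicate L False) =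
   (\<Prod>i<L. \<Sum>m\<le>i. W g h L mu i m / 2 ^ (2 * L + 1))"
proof -
  have S: "Sset L (replicate L False) = {..<L}" unfolding Sset_def by auto
  have cb: "cb {..<L} i = i" if "i < L" for i
  proof -
    have "{j \<in> {..<L}. j < i} = {..<i}" using that by auto
    then show ?thesis unfolding cb_def by simp
  qed
  have P: "Pw g h L mu L (replicate L True) (replicate L False) =
   (if card (Sset L (replicate L False)) = L then \<Prod>i\<in>Sset L (replicate L False).
      \<Sum>m\<le>cb (Sset L (replicate L False)) i. W g h L mu i m / 2 ^ (2 * L + 1) else 0)"
    by (rule Pw_formula) simp
  show ?thesis unfolding P S by (simp only: card_lessThan if_P[OF refl]) (rule prod.cong[OF refl], simp add: cb)
qed



lemma sum_rev_pow: "(\<Sum>m\<le>i. (x::complex) ^ (i - m)) = (\<Sum>m\<le>i. x ^ m)"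
proof -
  have "(\<Sum>m<Suc i. x ^ (Suc i - Suc m)) = (\<Sum>m<Suc i. x ^ m)"
    by (rule sum.nat_diff_reindex)
  then show ?thesis by (simp add: lessThan_Suc_atMost)
qed

lemma Pw_final:
  fixes L :: nat and g h :: complex and mu :: "nat \<Rightarrow> complex"
  defines "q \<equiv> exp g" and "t \<equiv> exp h"
  assumes "0 < L"
  shows "Pw g h L mu L (replicate L True) (replicate L False) =
     q ^ (L * (L - 1) div 2) / 2 ^ (L * (2 * L + 1)) * (q - 1 / q) ^ L
               * qfact (q ^ 2) L * (\<Prod>i=1..L. t * exp (- mu i) - exp (mu i) / t)"
proof -
  define D :: complex where "D = 2 ^ (2 * L + 1)"
  define c where "c = q - 1 / q"
  define X where "X = (\<lambda>i. t * exp (- mu (Suc i)) - exp (mu (Suc i)) / t)"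
  define G where "G = (\<lambda>i. \<Sum>m\<le>i. (q ^ 2) ^ m)"
  have step1: "(\<Sum>m\<le>i. W g h L mu i m / D) = c * q ^ (L - 1 - i) * X i * G i / D" for i
  proof -
    have "(\<Sum>m\<le>i. W g h L mu i m) = c * q ^ (L - 1 - i) *
        (t * exp (- mu (Suc i)) * (\<Sum>m\<le>i. (q ^ 2) ^ m) - exp (mu (Suc i)) / t * (\<Sum>m\<le>i. (q ^ 2) ^ (i - m)))"
      unfolding W_def c_def q_def t_def
      by (simp add: sum_distrib_left sum_subtractf right_diff_distrib mult.assoc)
    also have "\<dots> = c * q ^ (L - 1 - i) * X i * G i"
      unfolding sum_rev_pow X_def G_def by (simp add: algebra_simps)
    finally show ?thesis by (simp add: sum_divide_distrib[symmetric])
  qed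
  have "Pw g h L mu L (replicate L True) (replicate L False) = (\<Prod>i<L. c * q ^ (L - 1 - i) * X i * G i / D)"
    unfolding Pw_L D_def[symmetric] step1 ..
  also have "\<dots> = c ^ L * q ^ (\<Sum>i<L. L - 1 - i) * (\<Prod>i<L. X i) * (\<Prod>i<L. G i) / D ^ L"
    by (simp add: prod.distrib prod_dividef power_sum)
  also have "(\<Sum>i<L. L - 1 - i) = L * (L - 1) div 2"
  proof -
    have "(\<Sum>i<L. L - 1 - i) = (\<Sum>i<L. L - Suc i)" by simp
    also have "\<dots> = (\<Sum>i<L. i)" by (rule sum.nat_diff_reindex)
    also have "\<dots> = L * (L - 1) div 2" using Sum_Ico_nat[of 0 L] by (simp add: lessThan_atLeast0)
    finally show ?thesis .
  qed
  also have "(\<Prod>i<L. X i) = (\<Prod>i=1..L. t * exp (- mu i) - exp (mu i) / t)"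
    unfolding X_def using prod.atLeast1_atMost_eq[of "\<lambda>i. t * exp (- mu i) - exp (mu i) / t" L] by simp
  also have "(\<Prod>i<L. G i) = qfact (q ^ 2) L"
    unfolding qfact_def G_def using prod.atLeast1_atMost_eq[of "\<lambda>k. \<Sum>j<k. (q ^ 2) ^ j" L]
    by (simp add: lessThan_Suc_atMost)
  also have "D ^ L = 2 ^ (L * (2 * L + 1))"
    unfolding D_def by (simp add: power_mult[symmetric] mult.commute power_add)
  finally show ?thesis unfolding c_def by (simp add: field_simps)
qed



theorem lemma4:
  fixes L :: nat and g h :: complex and mu :: "nat \<Rightarrow> complex"
  defines "q \<equiv> exp g" and "t \<equiv> exp h"
  defines "C \<equiv> q ^ (L * (L - 1) div 2) / 2 ^ (L * (2 * L + 1)) * (q - 1 / q) ^ L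
               * qfact (q ^ 2) L * (\<Prod>i=1..L. t * exp (- mu i) - exp (mu i) / t)"
  assumes "0 < L"
    and "C \<noteq> 0"
  shows "\<forall>\<epsilon>>0. \<exists>M. \<forall>lams :: nat \<Rightarrow> complex. (\<forall>i\<in>{1..L}. M \<le> Re (lams i)) \<longrightarrow>
           cmod (Zbar g h L mu lams / (C * (\<Prod>i=1..L. exp (2 * lams i) ^ (2 * L))) - 1) < \<epsilon>"
proof -
  have PC: "Pw g h L mu L (replicate L True) (replicate L False) = C"
    unfolding C_def q_def t_def by (rule Pw_final[OF \<open>0 < L\<close>])
  have lim: "((\<lambda>lams. BN g h L mu lams L (replicate L True) (replicate L False) / C) \<longlongrightarrow> C / C) (Fl L)"
    using BN_lim[of L L g h mu "replicate L True" "replicate L False"] unfolding PC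
    by (intro tendsto_divide \<open>C \<noteq> 0\<close>) auto
  have eq: "Zbar g h L mu lams / (C * (\<Prod>i=1..L. exp (2 * lams i) ^ (2 * L))) =
     BN g h L mu lams L (replicate L True) (replicate L False) / C" for lams
  proof -
    have P: "(\<Prod>i=1..L. exp (2 * lams i) ^ (2 * L)) = (\<Prod>i=1..L. exp (2 * lams i) ^ L) * (\<Prod>i=1..L. exp (2 * lams i) ^ L)"
    proof -
      have "x ^ (2 * L) = x ^ L * x ^ L" for x :: complex by (simp only: mult_2 power_add)
      then show ?thesis by (simp only: prod.distrib)
    qed
    have nz: "(\<Prod>i=1..L. exp (2 * lams i) ^ L) \<noteq> 0" by simp
    show ?thesis unfolding P Zbar_def BN_def Zpf_def using nz \<open>C \<noteq> 0\<close>
      by (simp add: field_simps)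
  qed
  have lim1: "((\<lambda>lams. Zbar g h L mu lams / (C * (\<Prod>i=1..L. exp (2 * lams i) ^ (2 * L)))) \<longlongrightarrow> 1) (Fl L)"
    unfolding eq using lim \<open>C \<noteq> 0\<close> by simp
  show ?thesis
  proof (intro allI impI)
    fix e :: real assume "e > 0"
    with lim1 have ev: "eventually (\<lambda>lams. dist (Zbar g h L mu lams / (C * (\<Prod>i=1..L. exp (2 * lams i) ^ (2 * L)))) 1 < e) (Fl L)"
      by (rule tendstoD)
    have "\<exists>M\<in>UNIV. eventually (\<lambda>lams. dist (Zbar g h L mu lams / (C * (\<Prod>i=1..L. exp (2 * lams i) ^ (2 * L)))) 1 < e)
        (principal {lams. \<forall>i\<in>{1..L}. M \<le> Re (lams i)})"
    proof (rule eventually_INF_base[THEN iffD1])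
      show "UNIV \<noteq> {}" by simp
    next
      fix a b :: real
      show "\<exists>x\<in>UNIV. principal {lams. \<forall>i\<in>{1..L}. x \<le> Re (lams i)} \<le>
         inf (principal {lams. \<forall>i\<in>{1..L}. a \<le> Re (lams i)}) (principal {lams. \<forall>i\<in>{1..L}. b \<le> Re (lams i)})"
        by (rule bexI[where x="max a b"]) auto
    next
      show "eventually (\<lambda>lams. dist (Zbar g h L mu lams / (C * (\<Prod>i=1..L. exp (2 * lams i) ^ (2 * L)))) 1 < e)
         (INF M. principal {lams. \<forall>i\<in>{1..L}. M \<le> Re (lams i)})"
        using ev unfolding Fl_def .
    qed
    then show "\<exists>M. \<forall>lams :: nat \<Rightarrow> complex. (\<forall>i\<in>{1..L}. M \<le> Re (lams i)) \<longrightarrow>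
           cmod (Zbar g h L mu lams / (C * (\<Prod>i=1..L. exp (2 * lams i) ^ (2 * L))) - 1) < e"
      by (auto simp: eventually_principal dist_norm)
  qed
qed


end
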